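(* Let $\rho\in(0,1)$, $\alpha\ge0$, $k>2$ an integer, and define for $C\ge1$ the function $\hat\rho(C)=\tilde\rho(C)+3\alpha kC$. Let $C_0=\frac{2+\rho^k}{2-\rho^k}$. Then: (i) if $\alpha<\frac{\rho^k(1-\rho^k)}{3k(2+\rho^k)}=:\alpha_0$, there exists a nonempty interval $I$ containing $C_0$ such that $\hat\rho(C)<\rho^k$ for all $C\in I$; (ii) if $\alpha<\min\big(\frac{\rho^k(1-\rho^k)}{3k(2+\rho^k)},\frac{\rho^k-\rho_1}{3kC_1}\big)$, then $\hat\rho(C)<\rho^k$ for all $C\in[C_0,C_1]$; (iii) if $\alpha<\min\big(\frac{\rho^k(1-\rho^k)}{3k(2+\rho^k)},\frac{\rho^k-\rho_*}{3kC_*}\big)$, then $\hat\rho(C)<\rho^k$ for all $C\in[C_0,C_*]$.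
   Context: $\mathbb{R}_k[X]$ denotes real polynomials of degree at most $k$; $\|p\|_1$ is the sum of absolute values of coefficients of $p$. $\tilde\rho(C)=\min\{\max_{x\in[0,\rho]}|p(x)|:p\in\mathbb{R}_k[X],\ p(1)=1,\ \|p\|_1\le C\}$. (The quantity $\hat\rho(C)$ is the linear convergence factor guaranteed for one pass of Constrained Anderson Acceleration applied to a $\rho$-Lipschitz map $F=G+\xi$ with $0\preccurlyeq G\preccurlyeq\rho I$ symmetric and $\xi$ $\alpha$-Lipschitz.) $T_k$ is the first-kind Chebyshev polynomial of degree $k$; $C_*=\|p_*\|_1$ with $p_*(X)=T_k(\frac{2X-\rho}{\rho})/|T_k(\frac{2-\rho}{\rho})|$; $\rho_*=\frac{2\beta^k}{1+\beta^{2k}}$ with $\beta=\frac{1-\sqrt{1-\rho}}{1+\sqrt{1-\rho}}$; $\beta_\rho=\frac{\sqrt{1+\rho}-\sqrt{1-\rho}}{\sqrt{1+\rho}+\sqrt{1-\rho}}$, $\rho_1=\frac{2\beta_\rho^k}{1+\beta_\rho^{2k}}$, $C_1=\frac{\rho_1}{2\rho^k}\big((1-\sqrt{1+\rho^2})^k+(1+\sqrt{1+\rho^2})^k\big)$. *)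

theory Defs
  imports "HOL-Computational_Algebra.Polynomial"
begin

definition l1_coeffs :: "real poly \<Rightarrow> real" where
  "l1_coeffs p = (\<Sum>i\<le>degree p. \<bar>coeff p i\<bar>)"

definition sup_on :: "real \<Rightarrow> real poly \<Rightarrow> real" where
  "sup_on \<rho> p = (SUP x\<in>{0..\<rho>}. \<bar>poly p x\<bar>)"

text \<open>rho tilde (C): min over admissible polynomials (the minimum is attained; we write Inf).\<close>
definition rho_tilde :: "real \<Rightarrow> nat \<Rightarrow> real \<Rightarrow> real" where
  "rho_tilde \<rho> k C = Inf {sup_on \<rho> p | p. degree p \<le> k \<and> poly p 1 = 1 \<and> l1_coeffs p \<le> C}"

definition rho_hat :: "real \<Rightarrow> real \<Rightarrow> nat \<Rightarrow> real \<Rightarrow> real" where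
  "rho_hat \<rho> \<alpha> k C = rho_tilde \<rho> k C + 3 * \<alpha> * real k * C"

fun cheb :: "nat \<Rightarrow> real poly" where
  "cheb 0 = 1"
| "cheb (Suc 0) = [:0, 1:]"
| "cheb (Suc (Suc n)) = [:0, 2:] * cheb (Suc n) - cheb n"

definition p_star :: "real \<Rightarrow> nat \<Rightarrow> real poly" where
  "p_star \<rho> k = smult (1 / \<bar>poly (cheb k) ((2 - \<rho>) / \<rho>)\<bar>)
                     (pcompose (cheb k) [:-1, 2 / \<rho>:])"

definition C_star :: "real \<Rightarrow> nat \<Rightarrow> real" where
  "C_star \<rho> k = l1_coeffs (p_star \<rho> k)"

definition beta_star :: "real \<Rightarrow> real" where
  "beta_star \<rho> = (1 - sqrt (1 - \<rho>)) / (1 + sqrt (1 - \<rho>))"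

definition rho_star :: "real \<Rightarrow> nat \<Rightarrow> real" where
  "rho_star \<rho> k = 2 * beta_star \<rho> ^ k / (1 + beta_star \<rho> ^ (2 * k))"

definition beta_rho :: "real \<Rightarrow> real" where
  "beta_rho \<rho> = (sqrt (1 + \<rho>) - sqrt (1 - \<rho>)) / (sqrt (1 + \<rho>) + sqrt (1 - \<rho>))"

definition rho_1 :: "real \<Rightarrow> nat \<Rightarrow> real" where
  "rho_1 \<rho> k = 2 * beta_rho \<rho> ^ k / (1 + beta_rho \<rho> ^ (2 * k))"

definition C_1 :: "real \<Rightarrow> nat \<Rightarrow> real" where
  "C_1 \<rho> k = rho_1 \<rho> k / (2 * \<rho> ^ k) *
     ((1 - sqrt (1 + \<rho>\<^sup>2)) ^ k + (1 + sqrt (1 + \<rho>\<^sup>2)) ^ k)"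

definition C_0 :: "real \<Rightarrow> nat \<Rightarrow> real" where
  "C_0 \<rho> k = (2 + \<rho> ^ k) / (2 - \<rho> ^ k)"

definition alpha_0 :: "real \<Rightarrow> nat \<Rightarrow> real" where
  "alpha_0 \<rho> k = \<rho> ^ k * (1 - \<rho> ^ k) / (3 * real k * (2 + \<rho> ^ k))"

end

theory Submission imports Defs "HOL-Analysis.Analysis" begin

lemma l1_eq: "degree p \<le> N \<Longrightarrow> l1_coeffs p = (\<Sum>i\<le>N. \<bar>coeff p i\<bar>)"
  unfolding l1_coeffs_def
  by (rule sum.mono_neutral_left) (auto simp: coeff_eq_0)

lemma l1_add: "l1_coeffs (p + q) \<le> l1_coeffs p + l1_coeffs q"
proof -
  let ?N = "max (degree p) (degree q)"
  have "degree (p+q) \<le> ?N" by (simp add: degree_add_le)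
  hence "l1_coeffs (p+q) = (\<Sum>i\<le>?N. \<bar>coeff (p+q) i\<bar>)" by (rule l1_eq)
  also have "\<dots> \<le> (\<Sum>i\<le>?N. \<bar>coeff p i\<bar> + \<bar>coeff q i\<bar>)"
    by (rule sum_mono) (simp add: abs_triangle_ineq)
  also have "\<dots> = l1_coeffs p + l1_coeffs q"
    by (simp add: sum.distrib l1_eq[of p ?N] l1_eq[of q ?N])
  finally show ?thesis .
qed

lemma l1_smult: "l1_coeffs (smult c p) = \<bar>c\<bar> * l1_coeffs p"
proof -
  have "degree (smult c p) \<le> degree p" by (rule degree_smult_le)
  hence "l1_coeffs (smult c p) = (\<Sum>i\<le>degree p. \<bar>coeff (smult c p) i\<bar>)" by (rule l1_eq)
  thus ?thesis by (simp add: l1_coeffs_def sum_distrib_left abs_mult)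
qed

lemma l1_const: "l1_coeffs [:a:] = \<bar>a\<bar>"
  by (simp add: l1_coeffs_def)

lemma l1_monom: "l1_coeffs (monom a n) = \<bar>a\<bar>"
proof -
  have "l1_coeffs (monom a n) = (\<Sum>i\<le>n. \<bar>coeff (monom a n) i\<bar>)"
    by (rule l1_eq) (rule degree_monom_le)
  also have "\<dots> = \<bar>a\<bar>" by (simp add: if_distrib cong: if_cong)
  finally show ?thesis .
qed

lemma l1_pCons0: "l1_coeffs (pCons 0 p) = l1_coeffs p"
proof -
  have "degree (pCons 0 p) \<le> Suc (degree p)" by (simp add: degree_pCons_le)
  hence "l1_coeffs (pCons 0 p) = (\<Sum>i\<le>Suc (degree p). \<bar>coeff (pCons 0 p) i\<bar>)" by (rule l1_eq)
  also have "\<dots> = (\<Sum>i\<le>degree p. \<bar>coeff p i\<bar>)"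
    by (subst sum.atMost_Suc_shift) simp
  finally show ?thesis by (simp add: l1_coeffs_def)
qed

lemma l1_linmult: "l1_coeffs ([:0, c:] * p) = \<bar>c\<bar> * l1_coeffs p"
proof -
  have "[:0, c:] * p = smult c (pCons 0 p)"
    by (simp add: mult_pCons_left)
  thus ?thesis by (simp add: l1_smult l1_pCons0)
qed

lemma l1_poly1: "\<bar>poly p 1\<bar> \<le> l1_coeffs p"
  unfolding l1_coeffs_def poly_altdef
  by (rule order_trans[OF sum_abs]) simp

lemma sup_on_bdd: "bdd_above ((\<lambda>x. \<bar>poly (p::real poly) x\<bar>) ` {0..\<rho>})"
proof -
  have "continuous_on {0..\<rho>} (\<lambda>x. \<bar>poly p x\<bar>)"
    by (intro continuous_intros)
  hence "compact ((\<lambda>x. \<bar>poly p x\<bar>) ` {0..\<rho>})"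
    by (rule compact_continuous_image) simp
  thus ?thesis by (intro bounded_imp_bdd_above compact_imp_bounded)
qed

lemma sup_on_nonneg: "0 \<le> \<rho> \<Longrightarrow> 0 \<le> sup_on \<rho> p"
  unfolding sup_on_def
  by (rule cSUP_upper2[OF sup_on_bdd, of 0]) auto

lemma sup_on_le: "0 \<le> \<rho> \<Longrightarrow> (\<And>x. 0 \<le> x \<Longrightarrow> x \<le> \<rho> \<Longrightarrow> \<bar>poly p x\<bar> \<le> M) \<Longrightarrow> sup_on \<rho> p \<le> M"
  unfolding sup_on_def
  by (rule cSUP_least) auto

lemma rt_le:
  assumes "0 \<le> \<rho>" "degree p \<le> k" "poly p 1 = 1" "l1_coeffs p \<le> C"
    "\<And>x. 0 \<le> x \<Longrightarrow> x \<le> \<rho> \<Longrightarrow> \<bar>poly p x\<bar> \<le> M"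
  shows "rho_tilde \<rho> k C \<le> M"
  unfolding rho_tilde_def
proof (rule cInf_lower2)
  show "sup_on \<rho> p \<in> {sup_on \<rho> p | p. degree p \<le> k \<and> poly p 1 = 1 \<and> l1_coeffs p \<le> C}"
    using assms by blast
  show "sup_on \<rho> p \<le> M" by (rule sup_on_le) (use assms in auto)
  show "bdd_below {sup_on \<rho> p | p. degree p \<le> k \<and> poly p 1 = 1 \<and> l1_coeffs p \<le> C}"
    by (rule bdd_belowI[of _ 0]) (use sup_on_nonneg assms(1) in auto)
qed


lemma combo:
  fixes p0 p1 :: "real poly"
  assumes r: "0 \<le> \<rho>" and a: "0 \<le> \<alpha>"
    and d0: "degree p0 \<le> k" "poly p0 1 = 1" "l1_coeffs p0 \<le> c0"
    "\<And>x. 0 \<le> x \<Longrightarrow> x \<le> \<rho> \<Longrightarrow> \<bar>poly p0 x\<bar> \<le> M0"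
    and h0: "M0 + 3 * \<alpha> * real k * c0 < t"
    and d1: "degree p1 \<le> k" "poly p1 1 = 1" "l1_coeffs p1 \<le> c1"
    "\<And>x. 0 \<le> x \<Longrightarrow> x \<le> \<rho> \<Longrightarrow> \<bar>poly p1 x\<bar> \<le> M1"
    and h1: "M1 + 3 * \<alpha> * real k * c1 < t"
    and C: "c0 \<le> C" "C \<le> c1"
  shows "rho_hat \<rho> \<alpha> k C < t"
proof (cases "c0 = c1")
  case True
  hence "C = c0" using C by simp
  have "rho_tilde \<rho> k C \<le> M0" by (rule rt_le[OF r d0(1,2)]) (use d0 \<open>C = c0\<close> in auto)
  thus ?thesis using h0 \<open>C = c0\<close> by (simp add: rho_hat_def)
next
  case False
  hence lt: "c0 < c1" using C by simp
  define l where "l = (c1 - C) / (c1 - c0)"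
  have l0: "0 \<le> l" "l \<le> 1" using C lt by (auto simp: l_def field_simps)
  have "l * (c1 - c0) = c1 - C" using lt by (simp add: l_def)
  hence Ceq: "C = l * c0 + (1 - l) * c1" by (simp add: algebra_simps)
  define q where "q = smult l p0 + smult (1 - l) p1"
  have "rho_tilde \<rho> k C \<le> l * M0 + (1 - l) * M1"
  proof (rule rt_le[OF r])
    show "degree q \<le> k" unfolding q_def
      by (intro degree_add_le order_trans[OF degree_smult_le] d0 d1)
    show "poly q 1 = 1" unfolding q_def using d0 d1 by simp
    have "l1_coeffs q \<le> l1_coeffs (smult l p0) + l1_coeffs (smult (1 - l) p1)"
      unfolding q_def by (rule l1_add)
    also have "\<dots> = l * l1_coeffs p0 + (1 - l) * l1_coeffs p1" using l0 by (simp add: l1_smult)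
    also have "\<dots> \<le> l * c0 + (1 - l) * c1" using l0 d0 d1
      by (intro add_mono mult_left_mono) auto
    finally show "l1_coeffs q \<le> C" using Ceq by simp
    fix x assume x: "0 \<le> x" "x \<le> \<rho>"
    have "\<bar>poly q x\<bar> \<le> \<bar>l * poly p0 x\<bar> + \<bar>(1 - l) * poly p1 x\<bar>"
      unfolding q_def by simp
    also have "\<dots> = l * \<bar>poly p0 x\<bar> + (1 - l) * \<bar>poly p1 x\<bar>" using l0 by (simp add: abs_mult)
    also have "\<dots> \<le> l * M0 + (1 - l) * M1" using l0 d0(4)[OF x] d1(4)[OF x]
      by (intro add_mono mult_left_mono) auto
    finally show "\<bar>poly q x\<bar> \<le> l * M0 + (1 - l) * M1" .
  qed
  hence "rho_hat \<rho> \<alpha> k C \<le> l * (M0 + 3 * \<alpha> * real k * c0) + (1 - l) * (M1 + 3 * \<alpha> * real k * c1)"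
    unfolding rho_hat_def Ceq by (simp add: algebra_simps)
  also have "\<dots> < l * t + (1 - l) * t"
  proof (cases "l = 0")
    case True thus ?thesis using h1 by simp
  next
    case False
    hence "l * (M0 + 3 * \<alpha> * real k * c0) < l * t" using l0 h0 by simp
    moreover have "(1 - l) * (M1 + 3 * \<alpha> * real k * c1) \<le> (1 - l) * t"
      using l0 h1 by (intro mult_left_mono) auto
    ultimately show ?thesis by linarith
  qed
  finally show ?thesis by (simp add: algebra_simps)
qed

lemma degree_cheb: "degree (cheb n) \<le> n"
proof (induction n rule: cheb.induct)
  case (3 n)
  have "degree ([:0, 2:] * cheb (Suc n)) \<le> Suc (Suc n)"
    using 3(1) degree_mult_le[of "[:0,2:]" "cheb (Suc n)"] by simp
  moreover have "degree (cheb n) \<le> Suc (Suc n)" using 3(2) by simp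
  ultimately show ?case by (simp add: degree_diff_le)
qed auto

lemma cheb_cos: "poly (cheb n) (cos t) = cos (real n * t)"
proof (induction n rule: cheb.induct)
  case (3 n)
  have "cos (real (Suc (Suc n)) * t) = cos ((real (Suc n)) * t + t)" by (simp add: algebra_simps)
  moreover have "cos (real n * t) = cos ((real (Suc n)) * t - t)" by (simp add: algebra_simps)
  ultimately have "cos (real (Suc (Suc n)) * t) + cos (real n * t) = 2 * cos t * cos (real (Suc n) * t)"
    by (simp add: cos_add cos_diff)
  thus ?case using 3 by (simp add: algebra_simps)
qed auto

lemma cheb_bound: "\<bar>x\<bar> \<le> 1 \<Longrightarrow> \<bar>poly (cheb n) x\<bar> \<le> 1"
  using cheb_cos[of n "arccos x"] by (simp add: cos_arccos_abs)

lemma cheb_hyp: assumes vw: "v * w = 1" shows "poly (cheb n) ((v + w) / 2) = (v ^ n + w ^ n) / 2"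
proof (induction n rule: cheb.induct)
  case (3 n)
  have "v ^ Suc (Suc n) + w ^ Suc (Suc n) = (v + w) * (v ^ Suc n + w ^ Suc n) - (v * w) * (v ^ n + w ^ n)"
    by (simp add: algebra_simps)
  moreover have "poly (cheb (Suc (Suc n))) ((v + w) / 2) = (v + w) * poly (cheb (Suc n)) ((v + w) / 2) - poly (cheb n) ((v + w) / 2)"
    by simp
  moreover have "poly (cheb (Suc n)) ((v + w) / 2) = (v ^ Suc n + w ^ Suc n) / 2"
    "poly (cheb n) ((v + w) / 2) = (v ^ n + w ^ n) / 2" using 3 by auto
  ultimately show ?case using vw by (simp add: field_simps)
qed auto

lemma cheb_l1:
  assumes "0 \<le> c" "v + w = 2 * c" "v * w = -1"
  shows "l1_coeffs (pcompose (cheb n) [:0, c:]) \<le> (v ^ n + w ^ n) / 2"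
proof (induction n rule: cheb.induct)
  case 1 thus ?case using l1_const[of 1] by (simp add: pcompose_1 one_pCons)
next
  case 2
  have "pcompose [:0, 1:] [:0, c:] = [:0, c:]" by (simp add: pcompose_pCons)
  moreover have "l1_coeffs [:0, c:] = c" using l1_linmult[of c 1] assms(1) l1_const[of 1] by (simp add: one_pCons)
  ultimately show ?case using assms by simp
next
  case (3 n)
  have e: "pcompose (cheb (Suc (Suc n))) [:0, c:] = [:0, 2 * c:] * pcompose (cheb (Suc n)) [:0, c:] - pcompose (cheb n) [:0, c:]"
    by (simp add: pcompose_diff pcompose_mult pcompose_pCons pcompose_smult)
  have "l1_coeffs (pcompose (cheb (Suc (Suc n))) [:0, c:]) \<le> 2 * c * l1_coeffs (pcompose (cheb (Suc n)) [:0, c:]) + l1_coeffs (pcompose (cheb n) [:0, c:])"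
    unfolding e diff_conv_add_uminus
    using l1_add[of "[:0, 2 * c:] * pcompose (cheb (Suc n)) [:0, c:]" "- pcompose (cheb n) [:0, c:]"]
      l1_linmult[of "2*c"] l1_smult[of "-1" "pcompose (cheb n) [:0, c:]"] assms(1) by simp
  also have "\<dots> \<le> 2 * c * ((v ^ Suc n + w ^ Suc n) / 2) + (v ^ n + w ^ n) / 2"
    using 3 assms(1) by (intro add_mono mult_left_mono) auto
  also have "\<dots> = (v ^ Suc (Suc n) + w ^ Suc (Suc n)) / 2"
  proof -
    have "v ^ Suc (Suc n) + w ^ Suc (Suc n) = (v + w) * (v ^ Suc n + w ^ Suc n) - (v * w) * (v ^ n + w ^ n)"
      by (simp add: algebra_simps)
    thus ?thesis using assms by (simp add: field_simps)
  qed
  finally show ?case .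
qed


lemma beta_T:
  assumes "0 < (b::real)"
  shows "0 < (b ^ k + (1 / b) ^ k) / 2" "1 / ((b ^ k + (1 / b) ^ k) / 2) = 2 * b ^ k / (1 + b ^ (2 * k))"
proof -
  show "0 < (b ^ k + (1 / b) ^ k) / 2" using assms by (simp add: add_pos_pos)
  have "b ^ (2 * k) = b ^ k * b ^ k" by (simp add: power_mult power2_eq_square mult.commute)
  thus "1 / ((b ^ k + (1 / b) ^ k) / 2) = 2 * b ^ k / (1 + b ^ (2 * k))"
    using assms by (simp add: field_simps power_divide)
qed

lemma beta_rho_facts:
  assumes "0 < \<rho>" "\<rho> < 1"
  shows "0 < beta_rho \<rho>" "(beta_rho \<rho> + 1 / beta_rho \<rho>) / 2 = 1 / \<rho>"
proof -
  define a where "a = sqrt (1 + \<rho>)"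
  define b where "b = sqrt (1 - \<rho>)"
  have a2: "a\<^sup>2 = 1 + \<rho>" and b2: "b\<^sup>2 = 1 - \<rho>" using assms by (auto simp: a_def b_def)
  have b0: "0 < b" using assms by (simp add: b_def)
  have ab: "b < a" using assms unfolding a_def b_def by (simp add: real_sqrt_less_iff)
  have be: "beta_rho \<rho> = (a - b) / (a + b)" by (simp add: beta_rho_def a_def b_def)
  show "0 < beta_rho \<rho>" using ab b0 be by simp
  have "(a - b) / (a + b) + (a + b) / (a - b) = 2 * (a\<^sup>2 + b\<^sup>2) / (a\<^sup>2 - b\<^sup>2)"
    using ab b0 by (simp add: field_simps power2_eq_square)
  also have "\<dots> = 2 / \<rho>" using a2 b2 assms by (simp add: field_simps)
  finally show "(beta_rho \<rho> + 1 / beta_rho \<rho>) / 2 = 1 / \<rho>" using be by simp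
qed

lemma beta_star_facts:
  assumes "0 < \<rho>" "\<rho> < 1"
  shows "0 < beta_star \<rho>" "(beta_star \<rho> + 1 / beta_star \<rho>) / 2 = (2 - \<rho>) / \<rho>"
proof -
  define s where "s = sqrt (1 - \<rho>)"
  have s2: "s\<^sup>2 = 1 - \<rho>" using assms by (auto simp: s_def)
  have s0: "0 < s" "s < 1" using assms by (auto simp: s_def)
  have be: "beta_star \<rho> = (1 - s) / (1 + s)" by (simp add: beta_star_def s_def)
  show "0 < beta_star \<rho>" using s0 be by simp
  have "(1 - s) / (1 + s) + (1 + s) / (1 - s) = 2 * (1 + s\<^sup>2) / (1 - s\<^sup>2)"
    using s0 by (simp add: field_simps power2_eq_square)
  also have "\<dots> = 2 * (2 - \<rho>) / \<rho>" using s2 assms by (simp add: field_simps)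
  finally show "(beta_star \<rho> + 1 / beta_star \<rho>) / 2 = (2 - \<rho>) / \<rho>" using be assms by (simp add: field_simps)
qed


lemma p0_facts:
  fixes \<rho> :: real and k :: nat
  assumes "0 < \<rho>" "\<rho> < 1" "0 < k"
  defines "p0 \<equiv> smult (1 / (2 - \<rho> ^ k)) (monom 2 k + [:- (\<rho> ^ k):])"
  shows "degree p0 \<le> k" "poly p0 1 = 1" "l1_coeffs p0 \<le> C_0 \<rho> k"
    "\<And>x. 0 \<le> x \<Longrightarrow> x \<le> \<rho> \<Longrightarrow> \<bar>poly p0 x\<bar> \<le> \<rho> ^ k / (2 - \<rho> ^ k)"
proof -
  have r: "0 < \<rho> ^ k" "\<rho> ^ k < 1" using assms by (auto simp: power_less_one_iff)
  show "degree p0 \<le> k" unfolding p0_def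
    by (intro order_trans[OF degree_smult_le] degree_add_le degree_monom_le) auto
  show "poly p0 1 = 1" using r by (simp add: p0_def poly_monom)
  have "l1_coeffs (monom 2 k + [:- (\<rho> ^ k):]) \<le> 2 + \<rho> ^ k"
    using l1_add[of "monom 2 k" "[:- (\<rho> ^ k):]"] r by (simp add: l1_monom l1_const)
  thus "l1_coeffs p0 \<le> C_0 \<rho> k" using r
    by (simp add: p0_def l1_smult C_0_def divide_right_mono)
  fix x :: real assume x: "0 \<le> x" "x \<le> \<rho>"
  have "x ^ k \<le> \<rho> ^ k" using x by (intro power_mono) auto
  moreover have "0 \<le> x ^ k" using x by simp
  ultimately have "\<bar>2 * x ^ k - \<rho> ^ k\<bar> \<le> \<rho> ^ k" by linarith
  thus "\<bar>poly p0 x\<bar> \<le> \<rho> ^ k / (2 - \<rho> ^ k)" using r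
    by (simp add: p0_def poly_monom divide_right_mono)
qed

lemma p1_facts:
  fixes \<rho> :: real and k :: nat
  assumes "0 < \<rho>" "\<rho> < 1"
  defines "p1 \<equiv> smult (1 / poly (cheb k) (1 / \<rho>)) (pcompose (cheb k) [:0, 1 / \<rho>:])"
  shows "degree p1 \<le> k" "poly p1 1 = 1" "l1_coeffs p1 \<le> C_1 \<rho> k"
    "\<And>x. 0 \<le> x \<Longrightarrow> x \<le> \<rho> \<Longrightarrow> \<bar>poly p1 x\<bar> \<le> rho_1 \<rho> k"
proof -
  define b where "b = beta_rho \<rho>"
  have b: "0 < b" "(b + 1 / b) / 2 = 1 / \<rho>" unfolding b_def by (rule beta_rho_facts[OF assms(1,2)])+
  have T: "poly (cheb k) (1 / \<rho>) = (b ^ k + (1 / b) ^ k) / 2"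
    using cheb_hyp[of b "1/b" k] b by simp
  have Tp: "0 < poly (cheb k) (1 / \<rho>)" using T beta_T(1)[OF b(1), of k] by linarith
  have Ti: "1 / poly (cheb k) (1 / \<rho>) = rho_1 \<rho> k"
    unfolding T rho_1_def by (fold b_def) (rule beta_T(2)[OF b(1)])
  show "degree p1 \<le> k" unfolding p1_def
    by (rule order_trans[OF degree_smult_le]) (simp add: degree_pcompose degree_cheb)
  show "poly p1 1 = 1" using Tp by (simp add: p1_def poly_pcompose)
  define s where "s = sqrt (1 + \<rho>\<^sup>2)"
  have s2: "s\<^sup>2 = 1 + \<rho>\<^sup>2" by (simp add: s_def)
  have "l1_coeffs (pcompose (cheb k) [:0, 1 / \<rho>:]) \<le> (((1 + s) / \<rho>) ^ k + ((1 - s) / \<rho>) ^ k) / 2"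
  proof (rule cheb_l1)
    show "0 \<le> 1 / \<rho>" using assms by simp
    show "(1 + s) / \<rho> + (1 - s) / \<rho> = 2 * (1 / \<rho>)" using assms by (simp add: field_simps)
    show "(1 + s) / \<rho> * ((1 - s) / \<rho>) = - 1" using assms s2
      by (simp add: field_simps power2_eq_square)
  qed
  moreover have r1: "0 < rho_1 \<rho> k" using Tp Ti[symmetric] by simp
  moreover have "l1_coeffs p1 = rho_1 \<rho> k * l1_coeffs (pcompose (cheb k) [:0, 1 / \<rho>:])"
    using Tp Ti r1 by (simp add: p1_def l1_smult)
  ultimately have "l1_coeffs p1 \<le> rho_1 \<rho> k * ((((1 + s) / \<rho>) ^ k + ((1 - s) / \<rho>) ^ k) / 2)"
    by (simp add: mult_left_mono)
  also have "\<dots> = C_1 \<rho> k" using assms by (simp add: C_1_def s_def power_divide field_simps)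
  finally show "l1_coeffs p1 \<le> C_1 \<rho> k" .
  fix x :: real assume x: "0 \<le> x" "x \<le> \<rho>"
  have "\<bar>poly (cheb k) (x / \<rho>)\<bar> \<le> 1" using x assms by (intro cheb_bound) auto
  hence "\<bar>poly p1 x\<bar> \<le> 1 / poly (cheb k) (1 / \<rho>)" using Tp
    by (simp add: p1_def poly_pcompose abs_mult divide_right_mono mult.commute)
  thus "\<bar>poly p1 x\<bar> \<le> rho_1 \<rho> k" using Ti by simp
qed

lemma ps_facts:
  fixes \<rho> :: real
  assumes "0 < \<rho>" "\<rho> < 1"
  shows "degree (p_star \<rho> k) \<le> k" "poly (p_star \<rho> k) 1 = 1" "l1_coeffs (p_star \<rho> k) \<le> C_star \<rho> k"
    "\<And>x. 0 \<le> x \<Longrightarrow> x \<le> \<rho> \<Longrightarrow> \<bar>poly (p_star \<rho> k) x\<bar> \<le> rho_star \<rho> k"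
proof -
  define b where "b = beta_star \<rho>"
  have b: "0 < b" "(b + 1 / b) / 2 = (2 - \<rho>) / \<rho>" unfolding b_def by (rule beta_star_facts[OF assms(1,2)])+
  have T: "poly (cheb k) ((2 - \<rho>) / \<rho>) = (b ^ k + (1 / b) ^ k) / 2"
    using cheb_hyp[of b "1/b" k] b by simp
  have Tp: "0 < poly (cheb k) ((2 - \<rho>) / \<rho>)" using T beta_T(1)[OF b(1), of k] by linarith
  have Ti: "1 / poly (cheb k) ((2 - \<rho>) / \<rho>) = rho_star \<rho> k"
    unfolding T rho_star_def by (fold b_def) (rule beta_T(2)[OF b(1)])
  show "degree (p_star \<rho> k) \<le> k" unfolding p_star_def
    by (rule order_trans[OF degree_smult_le]) (simp add: degree_pcompose degree_cheb)
  have e: "-1 + 2 / \<rho> = (2 - \<rho>) / \<rho>" using assms by (simp add: field_simps)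
  show "poly (p_star \<rho> k) 1 = 1" using Tp e by (simp add: p_star_def poly_pcompose)
  show "l1_coeffs (p_star \<rho> k) \<le> C_star \<rho> k" by (simp add: C_star_def)
  fix x :: real assume x: "0 \<le> x" "x \<le> \<rho>"
  have "\<bar>x * (2 / \<rho>) - 1\<bar> \<le> 1" using x assms by (auto simp: field_simps abs_le_iff)
  hence "\<bar>poly (cheb k) (-1 + x * (2 / \<rho>))\<bar> \<le> 1" by (intro cheb_bound) simp
  hence "\<bar>poly (p_star \<rho> k) x\<bar> \<le> 1 / poly (cheb k) ((2 - \<rho>) / \<rho>)" using Tp
    by (simp add: p_star_def poly_pcompose abs_mult divide_right_mono mult.commute)
  thus "\<bar>poly (p_star \<rho> k) x\<bar> \<le> rho_star \<rho> k" using Ti by simp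
qed


theorem proposition7:
  fixes \<rho> \<alpha> :: real and k :: nat
  assumes "0 < \<rho>" "\<rho> < 1" "0 \<le> \<alpha>" "2 < k"
  shows "(\<alpha> < alpha_0 \<rho> k \<longrightarrow>
            (\<exists>a b. 1 \<le> a \<and> a < b \<and> C_0 \<rho> k \<in> {a..b} \<and>
                   (\<forall>C\<in>{a..b}. rho_hat \<rho> \<alpha> k C < \<rho> ^ k)))
       \<and> (\<alpha> < min (alpha_0 \<rho> k) ((\<rho> ^ k - rho_1 \<rho> k) / (3 * real k * C_1 \<rho> k)) \<longrightarrow>
            (\<forall>C\<in>{C_0 \<rho> k..C_1 \<rho> k}. rho_hat \<rho> \<alpha> k C < \<rho> ^ k))
       \<and> (\<alpha> < min (alpha_0 \<rho> k) ((\<rho> ^ k - rho_star \<rho> k) / (3 * real k * C_star \<rho> k)) \<longrightarrow>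
            (\<forall>C\<in>{C_0 \<rho> k..C_star \<rho> k}. rho_hat \<rho> \<alpha> k C < \<rho> ^ k))"
proof -
  have k0: "0 < k" using assms by simp
  have r: "0 < \<rho> ^ k" "\<rho> ^ k < 1" using assms by (auto simp: power_less_one_iff)
  define p0 where "p0 = smult (1 / (2 - \<rho> ^ k)) (monom 2 k + [:- (\<rho> ^ k):])"
  note P0 = p0_facts[OF assms(1,2) k0, folded p0_def]
  have C0: "1 \<le> C_0 \<rho> k" using r by (simp add: C_0_def)
  have h0: "\<rho> ^ k / (2 - \<rho> ^ k) + 3 * \<alpha> * real k * C_0 \<rho> k < \<rho> ^ k"
    if a: "\<alpha> < alpha_0 \<rho> k"
  proof -
    have "3 * \<alpha> * real k * C_0 \<rho> k < 3 * alpha_0 \<rho> k * real k * C_0 \<rho> k"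
      using a C0 k0 by (intro mult_strict_right_mono) auto
    also have "\<dots> = \<rho> ^ k - \<rho> ^ k / (2 - \<rho> ^ k)"
    proof -
      define t where "t = \<rho> ^ k"
      have t: "0 < t" "t < 1" using r by (auto simp: t_def)
      have nz: "2 + t \<noteq> 0" "2 - t \<noteq> 0" "real k \<noteq> 0" using t k0 by auto
      have "3 * alpha_0 \<rho> k * real k = t * (1 - t) / (2 + t)"
        using t k0 unfolding alpha_0_def t_def[symmetric] by (simp add: divide_simps)
      hence "3 * alpha_0 \<rho> k * real k * C_0 \<rho> k = t * (1 - t) / (2 + t) * ((2 + t) / (2 - t))"
        unfolding C_0_def t_def[symmetric] by simp
      also have "\<dots> = t * (1 - t) / (2 - t)" using nz by simp
      also have "\<dots> = t - t / (2 - t)" using t by (simp add: field_simps)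
      finally show ?thesis by (simp add: t_def)
    qed
    finally show ?thesis by simp
  qed
  have I: "\<exists>a b. 1 \<le> a \<and> a < b \<and> C_0 \<rho> k \<in> {a..b} \<and>
                   (\<forall>C\<in>{a..b}. rho_hat \<rho> \<alpha> k C < \<rho> ^ k)" if a: "\<alpha> < alpha_0 \<rho> k"
  proof -
    define D where "D = \<rho> ^ k - \<rho> ^ k / (2 - \<rho> ^ k) - 3 * \<alpha> * real k * C_0 \<rho> k"
    have D: "0 < D" using h0[OF a] by (simp add: D_def)
    define e where "e = 3 * \<alpha> * real k"
    have e0: "0 \<le> e" using assms by (simp add: e_def)
    define b where "b = C_0 \<rho> k + D / (e + 1)"
    have "e * (D / (e + 1)) < D" using D e0 by (simp add: field_simps)
    hence hb: "\<rho> ^ k / (2 - \<rho> ^ k) + 3 * \<alpha> * real k * b < \<rho> ^ k"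
      by (simp add: b_def D_def e_def algebra_simps)
    have "C_0 \<rho> k < b" using D e0 by (simp add: b_def)
    moreover have "\<forall>C\<in>{C_0 \<rho> k..b}. rho_hat \<rho> \<alpha> k C < \<rho> ^ k"
    proof
      fix C assume C: "C \<in> {C_0 \<rho> k..b}"
      show "rho_hat \<rho> \<alpha> k C < \<rho> ^ k"
        by (rule combo[OF _ assms(3) P0(1,2,3) P0(4) h0[OF a] P0(1,2) _ P0(4) hb])
           (use assms C C0 P0(3) in auto)
    qed
    ultimately show ?thesis using C0 by fastforce
  qed
  have II: "\<forall>C\<in>{C_0 \<rho> k..C_1 \<rho> k}. rho_hat \<rho> \<alpha> k C < \<rho> ^ k"
    if a: "\<alpha> < min (alpha_0 \<rho> k) ((\<rho> ^ k - rho_1 \<rho> k) / (3 * real k * C_1 \<rho> k))"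
  proof
    fix C assume C: "C \<in> {C_0 \<rho> k..C_1 \<rho> k}"
    define p1 where "p1 = smult (1 / poly (cheb k) (1 / \<rho>)) (pcompose (cheb k) [:0, 1 / \<rho>:])"
    note P1 = p1_facts[OF assms(1,2), where k=k, folded p1_def]
    have a0: "\<alpha> < alpha_0 \<rho> k" using a by simp
    have pos: "0 < 3 * real k * C_1 \<rho> k" using C C0 k0 by auto
    have "\<alpha> < (\<rho> ^ k - rho_1 \<rho> k) / (3 * real k * C_1 \<rho> k)" using a by simp
    hence "\<alpha> * (3 * real k * C_1 \<rho> k) < \<rho> ^ k - rho_1 \<rho> k" using pos by (simp add: less_divide_eq)
    hence h1: "rho_1 \<rho> k + 3 * \<alpha> * real k * C_1 \<rho> k < \<rho> ^ k" by (simp add: algebra_simps)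
    show "rho_hat \<rho> \<alpha> k C < \<rho> ^ k"
      by (rule combo[OF _ assms(3) P0(1,2,3) P0(4) h0[OF a0] P1(1,2,3) P1(4) h1])
         (use assms C a in auto)
  qed
  have III: "\<forall>C\<in>{C_0 \<rho> k..C_star \<rho> k}. rho_hat \<rho> \<alpha> k C < \<rho> ^ k"
    if a: "\<alpha> < min (alpha_0 \<rho> k) ((\<rho> ^ k - rho_star \<rho> k) / (3 * real k * C_star \<rho> k))"
  proof
    fix C assume C: "C \<in> {C_0 \<rho> k..C_star \<rho> k}"
    note P1 = ps_facts[OF assms(1,2), where k=k]
    have a0: "\<alpha> < alpha_0 \<rho> k" using a by simp
    have pos: "0 < 3 * real k * C_star \<rho> k" using C C0 k0 by auto
    have "\<alpha> < (\<rho> ^ k - rho_star \<rho> k) / (3 * real k * C_star \<rho> k)" using a by simp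
    hence "\<alpha> * (3 * real k * C_star \<rho> k) < \<rho> ^ k - rho_star \<rho> k" using pos by (simp add: less_divide_eq)
    hence h1: "rho_star \<rho> k + 3 * \<alpha> * real k * C_star \<rho> k < \<rho> ^ k" by (simp add: algebra_simps)
    show "rho_hat \<rho> \<alpha> k C < \<rho> ^ k"
      by (rule combo[OF _ assms(3) P0(1,2,3) P0(4) h0[OF a0] P1(1,2,3) P1(4) h1])
         (use assms C a in auto)
  qed
  show ?thesis using I II III by blast
qed

end
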